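(* Let $\omega$ be a weight on a countable group $G$, and let $\mu$ be a probability measure on $G$ with finite first $\log\omega$-moment. Then: (i) $\mathrm{Ly}_\omega(G,\mu)\ge 0$; (ii) if $\tilde\omega$ is a weight on $G$ equivalent to $\omega$, then $\mathrm{Ly}_{\tilde\omega}(G,\mu)=\mathrm{Ly}_\omega(G,\mu)$; (iii) if $G$ is finitely generated with finite symmetric generating set $S$ containing $e$ and $\mu$ has finite first moment with respect to the word length $|\cdot|_S$, then the Lyapunov exponent of $\mu$ with respect to $\omega$ exists and \[ \mathrm{Ly}_\omega(G,\mu)\le(\log\omega_S)\,l(G,\mu). \]
   Context: A weight on $G$ is $\omega:G\to[a,\infty)$, $a>0$, with $\omega(st)\le C\omega(s)\omega(t)$ for some $C>0$ and all $s,t$. Two weights $\omega,\tilde\omega$ are equivalent if $c\,\omega\le\tilde\omega\le c'\omega$ for some $c,c'>0$. Finite first $\log\omega$-moment means $\sum_s\mu(s)\log\omega(s)<\infty$. The Lyapunov exponent is $\mathrm{Ly}_\omega(G,\mu)=\lim_{n\to\infty}\frac1n\sum_s\mu^{*n}(s)\log\omega(s)$, where $\mu^{*n}$ is the $n$-fold convolution power ($\mu*\nu(s)=\sum_t\mu(t)\nu(t^{-1}s)$). For finite symmetric generating $S\ni e$, the growth rate is $\omega_S=\lim_{n\to\infty}\sup_{s\in S^n}\omega(s)^{1/n}$; finite first moment means $\sum_s\mu(s)|s|_S<\infty$; the speed is $l(G,\mu)=\lim_{n\to\infty}\frac1n\sum_s\mu^{*n}(s)|s|_S$. *)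

theory Defs
  imports "HOL-Analysis.Analysis" "HOL-Algebra.Algebra"
begin

definition weight :: "('a, 'b) monoid_scheme \<Rightarrow> ('a \<Rightarrow> real) \<Rightarrow> bool" where
  "weight G w \<longleftrightarrow>
     (\<exists>a>0. \<forall>s\<in>carrier G. a \<le> w s) \<and>
     (\<exists>C>0. \<forall>s\<in>carrier G. \<forall>t\<in>carrier G. w (s \<otimes>\<^bsub>G\<^esub> t) \<le> C * w s * w t)"

definition weight_equiv :: "('a, 'b) monoid_scheme \<Rightarrow> ('a \<Rightarrow> real) \<Rightarrow> ('a \<Rightarrow> real) \<Rightarrow> bool" where
  "weight_equiv G w w' \<longleftrightarrow>
     (\<exists>c>0. \<exists>c'>0. \<forall>s\<in>carrier G. c * w s \<le> w' s \<and> w' s \<le> c' * w s)"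

definition prob_on :: "('a, 'b) monoid_scheme \<Rightarrow> ('a \<Rightarrow> real) \<Rightarrow> bool" where
  "prob_on G \<mu> \<longleftrightarrow> (\<forall>s\<in>carrier G. 0 \<le> \<mu> s) \<and> (\<mu> has_sum 1) (carrier G)"

definition conv :: "('a, 'b) monoid_scheme \<Rightarrow> ('a \<Rightarrow> real) \<Rightarrow> ('a \<Rightarrow> real) \<Rightarrow> 'a \<Rightarrow> real" where
  "conv G \<mu> \<nu> s = (\<Sum>\<^sub>\<infinity>t\<in>carrier G. \<mu> t * \<nu> (inv\<^bsub>G\<^esub> t \<otimes>\<^bsub>G\<^esub> s))"

primrec conv_pow :: "('a, 'b) monoid_scheme \<Rightarrow> ('a \<Rightarrow> real) \<Rightarrow> nat \<Rightarrow> 'a \<Rightarrow> real" where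
  "conv_pow G \<mu> 0 = (\<lambda>s. if s = \<one>\<^bsub>G\<^esub> then 1 else 0)"
| "conv_pow G \<mu> (Suc n) = conv G (conv_pow G \<mu> n) \<mu>"

definition finite_log_moment :: "('a, 'b) monoid_scheme \<Rightarrow> ('a \<Rightarrow> real) \<Rightarrow> ('a \<Rightarrow> real) \<Rightarrow> bool" where
  "finite_log_moment G w \<mu> \<longleftrightarrow> (\<lambda>s. \<mu> s * ln (w s)) summable_on carrier G"

definition lyap_seq :: "('a, 'b) monoid_scheme \<Rightarrow> ('a \<Rightarrow> real) \<Rightarrow> ('a \<Rightarrow> real) \<Rightarrow> nat \<Rightarrow> real" where
  "lyap_seq G w \<mu> n = (\<Sum>\<^sub>\<infinity>s\<in>carrier G. conv_pow G \<mu> n s * ln (w s)) / real n"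

definition lyapunov :: "('a, 'b) monoid_scheme \<Rightarrow> ('a \<Rightarrow> real) \<Rightarrow> ('a \<Rightarrow> real) \<Rightarrow> real" where
  "lyapunov G w \<mu> = lim (lyap_seq G w \<mu>)"

primrec words :: "('a, 'b) monoid_scheme \<Rightarrow> 'a set \<Rightarrow> nat \<Rightarrow> 'a set" where
  "words G S 0 = {\<one>\<^bsub>G\<^esub>}"
| "words G S (Suc n) = {x \<otimes>\<^bsub>G\<^esub> y | x y. x \<in> words G S n \<and> y \<in> S}"

definition word_length :: "('a, 'b) monoid_scheme \<Rightarrow> 'a set \<Rightarrow> 'a \<Rightarrow> nat" where
  "word_length G S s = (LEAST n. s \<in> words G S n)"

definition growth_rate :: "('a, 'b) monoid_scheme \<Rightarrow> ('a \<Rightarrow> real) \<Rightarrow> 'a set \<Rightarrow> real" where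
  "growth_rate G w S = lim (\<lambda>n. (SUP s\<in>words G S n. w s) powr (1 / real n))"

definition finite_first_moment :: "('a, 'b) monoid_scheme \<Rightarrow> 'a set \<Rightarrow> ('a \<Rightarrow> real) \<Rightarrow> bool" where
  "finite_first_moment G S \<mu> \<longleftrightarrow> (\<lambda>s. \<mu> s * real (word_length G S s)) summable_on carrier G"

definition speed_seq :: "('a, 'b) monoid_scheme \<Rightarrow> 'a set \<Rightarrow> ('a \<Rightarrow> real) \<Rightarrow> nat \<Rightarrow> real" where
  "speed_seq G S \<mu> n = (\<Sum>\<^sub>\<infinity>s\<in>carrier G. conv_pow G \<mu> n s * real (word_length G S s)) / real n"

definition speed :: "('a, 'b) monoid_scheme \<Rightarrow> 'a set \<Rightarrow> ('a \<Rightarrow> real) \<Rightarrow> real" where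
  "speed G S \<mu> = lim (speed_seq G S \<mu>)"

end

theory Submission imports Defs begin

lemma tonelli:
  fixes F :: "'x \<Rightarrow> 'y \<Rightarrow> real"
  assumes nn: "\<And>x y. x\<in>A \<Longrightarrow> y\<in>B \<Longrightarrow> F x y \<ge> 0"
    and rows: "\<And>x. x\<in>A \<Longrightarrow> (F x has_sum g x) B"
    and gs: "g summable_on A"
  shows "\<And>y. y \<in> B \<Longrightarrow> (\<lambda>x. F x y) summable_on A"
    and "((\<lambda>y. \<Sum>\<^sub>\<infinity>x\<in>A. F x y) has_sum (infsum g A)) B"
proof -
  have S: "(\<lambda>(x,y). F x y) summable_on (A \<times> B)"
    using summable_on_SigmaI[where f="\<lambda>(x,y). F x y" and A=A and B="\<lambda>_. B" and g=g] nn rows gs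
    by auto
  then obtain S0 where S0: "((\<lambda>(x,y). F x y) has_sum S0) (A \<times> B)"
    using summable_on_def by blast
  have "(g has_sum S0) A"
    using has_sum_Sigma'[where f="\<lambda>(x,y). F x y" and A=A and B="\<lambda>_. B" and b=g] S0 rows by auto
  hence gS: "infsum g A = S0" by (simp add: infsumI)
  have S0': "((\<lambda>(y,x). F x y) has_sum S0) (B \<times> A)"
    using S0 unfolding has_sum_swap[where f="\<lambda>(x,y). F x y"] by simp
  hence S': "(\<lambda>(y,x). F x y) summable_on (B \<times> A)" using summable_on_def by blast
  show col: "\<And>y. y \<in> B \<Longrightarrow> (\<lambda>x. F x y) summable_on A"
    using summable_on_SigmaD1[where f="\<lambda>y x. F x y" and A=B and B="\<lambda>_. A"] S' by auto
  show "((\<lambda>y. \<Sum>\<^sub>\<infinity>x\<in>A. F x y) has_sum (infsum g A)) B"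
    unfolding gS
  proof (rule has_sum_Sigma'[where f="\<lambda>(y,x). F x y" and A=B and B="\<lambda>_. A"])
    show "((\<lambda>(y,x). F x y) has_sum S0) (SIGMA y:B. A)" using S0' by simp
    fix y assume "y \<in> B"
    thus "((\<lambda>x. case (y, x) of (y, x) \<Rightarrow> F x y) has_sum (\<Sum>\<^sub>\<infinity>x\<in>A. F x y)) A"
      using col[of y] by (simp add: has_sum_infsum)
  qed
qed

lemma fekete:
  fixes u :: "nat \<Rightarrow> real"
  assumes sub: "\<And>m n. m > 0 \<Longrightarrow> n > 0 \<Longrightarrow> u (m + n) \<le> u m + u n"
    and lb: "\<And>n. n > 0 \<Longrightarrow> u n \<ge> c"
  shows "(\<lambda>n. u n / real n) \<longlonglongrightarrow> Inf ((\<lambda>n. u n / real n) ` {0<..})"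
proof -
  define L where "L = Inf ((\<lambda>n. u n / real n) ` {0<..})"
  have bdd: "bdd_below ((\<lambda>n. u n / real n) ` {0<..})"
  proof (rule bdd_belowI2[where m="min c 0"])
    fix n :: nat assume "n \<in> {0<..}"
    hence n: "n \<ge> 1" by auto
    show "min c 0 \<le> u n / real n"
    proof (cases "u n \<ge> 0")
      case True hence "u n / real n \<ge> 0" by simp
      thus ?thesis by linarith
    next
      case False
      have "u n * real n \<le> u n * 1" using False n by (intro mult_left_mono_neg) auto
      hence "u n / real n \<ge> u n" using n by (simp add: le_divide_eq)
      thus ?thesis using lb[of n] n by linarith
    qed
  qed
  have low: "L \<le> u n / real n" if "n > 0" for n
    unfolding L_def using bdd that by (intro cInf_lower) auto
  have rep: "u (q * m + r) \<le> real q * u m + u r" if "m > 0" "r > 0" for q m r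
  proof (induction q)
    case 0 thus ?case by simp
  next
    case (Suc q)
    have "u (Suc q * m + r) = u (m + (q * m + r))" by (simp add: algebra_simps)
    also have "\<dots> \<le> u m + u (q * m + r)" using sub that by simp
    also have "\<dots> \<le> real (Suc q) * u m + u r" using Suc by (simp add: algebra_simps)
    finally show ?case .
  qed
  show ?thesis
    unfolding L_def[symmetric]
  proof (rule LIMSEQ_I)
    fix r :: real assume r: "r > 0"
    have "\<exists>y\<in>(\<lambda>n. u n / real n) ` {0<..}. y < L + r/2"
      by (rule cInf_lessD) (use r in \<open>auto simp: L_def\<close>)
    then obtain m where m: "m > 0" "u m / real m < L + r/2" by auto
    define R where "R = Max (u ` {1..m})"
    have R: "u k \<le> R" if "k \<in> {1..m}" for k
      unfolding R_def using that by (intro Max_ge) auto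
    define D where "D = \<bar>u m\<bar> + \<bar>R\<bar>"
    obtain N :: nat where N: "D / (r/2) < real N" using reals_Archimedean2 by blast
    show "\<exists>no. \<forall>n\<ge>no. norm (u n / real n - L) < r"
    proof (rule exI[of _ "Suc N"], intro allI impI)
      fix n :: nat assume n: "n \<ge> Suc N"
      define q where "q = (n - 1) div m"
      define k where "k = (n - 1) mod m + 1"
      have "n - 1 = q * m + (n - 1) mod m" unfolding q_def by simp
      hence nqk: "n = q * m + k" unfolding k_def using n by linarith
      have k: "k \<in> {1..m}" unfolding k_def using m by (auto simp: Suc_le_eq)
      have un: "u n \<le> real q * u m + R" using rep[OF m(1), of k q] R[OF k] k nqk by auto
      have qm: "real q * real m \<le> real n" "real n - real m \<le> real q * real m"
        using nqk k by (auto simp flip: of_nat_mult of_nat_add)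
      have npos: "real n > 0" using n by auto
      have "real q * u m \<le> real n * (u m / real m) + \<bar>u m\<bar>"
      proof (cases "u m \<ge> 0")
        case True
        have "real q * u m = (real q * real m) * (u m / real m)" using m by simp
        also have "\<dots> \<le> real n * (u m / real m)" using qm True m by (intro mult_right_mono) auto
        finally show ?thesis by simp
      next
        case False
        have "real q * u m = (real q * real m) * (u m / real m)" using m by simp
        also have "\<dots> \<le> (real n - real m) * (u m / real m)" using qm False m
          by (intro mult_right_mono_neg) (auto simp: divide_le_0_iff)
        also have "\<dots> = real n * (u m / real m) - u m" using m by (simp add: field_simps)
        finally show ?thesis using False by simp
      qed
      hence "u n \<le> real n * (u m / real m) + D" using un unfolding D_def by linarith
      hence "u n / real n \<le> u m / real m + D / real n" using npos
        by (simp add: field_simps)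
      moreover have "D / real n < r / 2"
      proof -
        have "D \<ge> 0" unfolding D_def by simp
        have "D < r/2 * real N" using N r by (simp add: field_simps)
        also have "\<dots> \<le> r/2 * real n" using n r by simp
        finally show ?thesis using npos by (simp add: field_simps)
      qed
      moreover have "L \<le> u n / real n" using low n by simp
      ultimately have "u n / real n - L < r" "0 \<le> u n / real n - L" using m(2) by linarith+
      thus "norm (u n / real n - L) < r" by simp
    qed
  qed
qed


context group
begin

lemma mult_bij: "t \<in> carrier G \<Longrightarrow> bij_betw (\<lambda>u. t \<otimes> u) (carrier G) (carrier G)"
  by (rule bij_betwI[where g="\<lambda>s. inv t \<otimes> s"]) (auto simp: m_assoc[symmetric])

lemma conv_exp:
  assumes nu: "\<And>t. t\<in>carrier G \<Longrightarrow> \<nu> t \<ge> 0" and mu: "\<And>u. u\<in>carrier G \<Longrightarrow> \<mu> u \<ge> 0"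
    and f: "\<And>s. s\<in>carrier G \<Longrightarrow> f s \<ge> 0"
    and inner: "\<And>t. t \<in> carrier G \<Longrightarrow> (\<lambda>u. \<mu> u * f (t \<otimes> u)) summable_on carrier G"
    and outer: "(\<lambda>t. \<nu> t * (\<Sum>\<^sub>\<infinity>u\<in>carrier G. \<mu> u * f (t \<otimes> u))) summable_on carrier G"
  shows "((\<lambda>s. conv G \<nu> \<mu> s * f s) has_sum
           (\<Sum>\<^sub>\<infinity>t\<in>carrier G. \<nu> t * (\<Sum>\<^sub>\<infinity>u\<in>carrier G. \<mu> u * f (t \<otimes> u)))) (carrier G)"
proof -
  define F where "F t s = \<nu> t * \<mu> (inv t \<otimes> s) * f s" for t s
  define g where "g t = \<nu> t * (\<Sum>\<^sub>\<infinity>u\<in>carrier G. \<mu> u * f (t \<otimes> u))" for t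
  have rows: "(F t has_sum g t) (carrier G)" if t: "t \<in> carrier G" for t
  proof -
    have "((\<lambda>u. \<mu> u * f (t \<otimes> u)) has_sum (\<Sum>\<^sub>\<infinity>u\<in>carrier G. \<mu> u * f (t \<otimes> u))) (carrier G)"
      using inner[OF t] by simp
    hence "((\<lambda>u. \<nu> t * (\<mu> u * f (t \<otimes> u))) has_sum g t) (carrier G)"
      unfolding g_def by (rule has_sum_cmult_right)
    also have "?this \<longleftrightarrow> ((\<lambda>u. F t (t \<otimes> u)) has_sum g t) (carrier G)"
      by (intro has_sum_cong) (use t in \<open>auto simp: F_def m_assoc[symmetric]\<close>)
    also have "\<dots> \<longleftrightarrow> (F t has_sum g t) (carrier G)"
      by (rule has_sum_reindex_bij_betw[OF mult_bij[OF t]])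
    finally show ?thesis .
  qed
  have nn: "F t s \<ge> 0" if "t \<in> carrier G" "s \<in> carrier G" for t s
    unfolding F_def using that nu mu f by auto
  have gs: "g summable_on carrier G" using outer unfolding g_def .
  have T: "((\<lambda>s. \<Sum>\<^sub>\<infinity>t\<in>carrier G. F t s) has_sum infsum g (carrier G)) (carrier G)"
    using tonelli(2)[of "carrier G" "carrier G" F g] nn rows gs by blast
  have "(\<Sum>\<^sub>\<infinity>t\<in>carrier G. F t s) = conv G \<nu> \<mu> s * f s" for s
    unfolding F_def conv_def by (rule infsum_cmult_left')
  with T show ?thesis unfolding g_def by simp
qed

lemma prob_nonneg: "prob_on G \<nu> \<Longrightarrow> s \<in> carrier G \<Longrightarrow> \<nu> s \<ge> 0"
  unfolding prob_on_def by auto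

lemma prob_summable: "prob_on G \<nu> \<Longrightarrow> \<nu> summable_on carrier G"
  unfolding prob_on_def using has_sum_imp_summable by blast

lemma prob_sum: "prob_on G \<nu> \<Longrightarrow> infsum \<nu> (carrier G) = 1"
  unfolding prob_on_def using infsumI by blast

lemma prob_le1: assumes "prob_on G \<nu>" "s \<in> carrier G" shows "\<nu> s \<le> 1"
proof -
  have "(\<nu> has_sum \<nu> s) {s}" by (rule has_sum_finiteI) auto
  moreover have "(\<nu> has_sum 1) (carrier G)" using assms unfolding prob_on_def by auto
  ultimately show ?thesis
    by (rule has_sum_mono_neutral) (use assms in \<open>auto simp: prob_on_def\<close>)
qed

lemma inner_bound:
  assumes p: "prob_on G \<mu>" and phi: "\<And>u. u \<in> carrier G \<Longrightarrow> 0 \<le> \<phi> u \<and> \<phi> u \<le> 1"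
  shows "(\<lambda>u. \<mu> u * \<phi> u) summable_on carrier G"
    and "0 \<le> (\<Sum>\<^sub>\<infinity>u\<in>carrier G. \<mu> u * \<phi> u)"
    and "(\<Sum>\<^sub>\<infinity>u\<in>carrier G. \<mu> u * \<phi> u) \<le> 1"
proof -
  have b: "0 \<le> \<mu> u * \<phi> u" "\<mu> u * \<phi> u \<le> \<mu> u" if "u \<in> carrier G" for u
    using phi[OF that] prob_nonneg[OF p that] by (auto simp: mult_left_le)
  show s: "(\<lambda>u. \<mu> u * \<phi> u) summable_on carrier G"
    by (rule summable_on_comparison_test[OF prob_summable[OF p]]) (use b in auto)
  show "0 \<le> (\<Sum>\<^sub>\<infinity>u\<in>carrier G. \<mu> u * \<phi> u)" using b by (intro infsum_nonneg) auto
  have "(\<Sum>\<^sub>\<infinity>u\<in>carrier G. \<mu> u * \<phi> u) \<le> infsum \<mu> (carrier G)"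
    by (rule infsum_mono[OF s prob_summable[OF p]]) (use b in auto)
  thus "(\<Sum>\<^sub>\<infinity>u\<in>carrier G. \<mu> u * \<phi> u) \<le> 1" using prob_sum[OF p] by simp
qed

lemma conv_nonneg:
  assumes "prob_on G \<nu>" "prob_on G \<mu>" "s \<in> carrier G"
  shows "conv G \<nu> \<mu> s \<ge> 0"
  unfolding conv_def using prob_nonneg[OF assms(1)] prob_nonneg[OF assms(2)] assms(3)
  by (intro infsum_nonneg mult_nonneg_nonneg) auto

lemma prob_conv:
  assumes pn: "prob_on G \<nu>" and pm: "prob_on G \<mu>"
  shows "prob_on G (conv G \<nu> \<mu>)"
proof -
  have "((\<lambda>s. conv G \<nu> \<mu> s * 1) has_sum
           (\<Sum>\<^sub>\<infinity>t\<in>carrier G. \<nu> t * (\<Sum>\<^sub>\<infinity>u\<in>carrier G. \<mu> u * 1))) (carrier G)"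
    by (rule conv_exp) (use pn pm in \<open>auto intro: prob_nonneg simp: prob_summable prob_sum\<close>)
  hence "(conv G \<nu> \<mu> has_sum 1) (carrier G)" using pn pm by (simp add: prob_sum)
  thus ?thesis unfolding prob_on_def using conv_nonneg[OF pn pm] by auto
qed

lemma conv_cong:
  assumes "\<And>x. x \<in> carrier G \<Longrightarrow> \<nu> x = \<nu>' x" "\<And>x. x \<in> carrier G \<Longrightarrow> \<mu> x = \<mu>' x" "s \<in> carrier G"
  shows "conv G \<nu> \<mu> s = conv G \<nu>' \<mu>' s"
  unfolding conv_def using assms by (intro infsum_cong) auto

lemma conv_delta_right:
  assumes s: "s \<in> carrier G"
  shows "conv G \<nu> (conv_pow G \<mu> 0) s = \<nu> s"
proof -
  have "conv G \<nu> (conv_pow G \<mu> 0) s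
      = (\<Sum>\<^sub>\<infinity>t\<in>carrier G. \<nu> t * (if inv t \<otimes> s = \<one> then 1 else 0))"
    unfolding conv_def by simp
  also have "\<dots> = (\<Sum>\<^sub>\<infinity>t\<in>{s}. \<nu> t * (if inv t \<otimes> s = \<one> then 1 else 0))"
  proof (rule infsum_cong_neutral)
    fix t assume t: "t \<in> carrier G - {s}"
    hence "inv t \<otimes> s \<noteq> \<one>" using s inv_solve_left'[of "\<one>" t s] by auto
    thus "\<nu> t * (if inv t \<otimes> s = \<one> then 1 else 0) = 0" by simp
  qed (use s in auto)
  also have "\<dots> = \<nu> s" using s by simp
  finally show ?thesis .
qed

lemma prob_delta: "prob_on G (conv_pow G \<mu> 0)"
proof -
  have "((\<lambda>s. if s = \<one> then 1 else 0) has_sum 1) {\<one>}" by (rule has_sum_finiteI) auto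
  hence "((\<lambda>s. if s = \<one> then 1 else (0::real)) has_sum 1) (carrier G)"
    by (subst has_sum_cong_neutral[where T="{\<one>}" and g="\<lambda>s. if s = \<one> then 1 else 0"]) auto
  thus ?thesis unfolding prob_on_def by auto
qed

lemma prob_pow: "prob_on G \<mu> \<Longrightarrow> prob_on G (conv_pow G \<mu> n)"
  by (induction n) (use prob_delta[of \<mu>] in \<open>auto intro: prob_conv\<close>)

lemma conv_assoc:
  assumes pn: "prob_on G \<nu>" and pm: "prob_on G \<mu>" and pl: "prob_on G l" and s: "s \<in> carrier G"
  shows "conv G (conv G \<nu> \<mu>) l s = conv G \<nu> (conv G \<mu> l) s"
proof -
  have phi: "0 \<le> l (inv (t \<otimes> u) \<otimes> s) \<and> l (inv (t \<otimes> u) \<otimes> s) \<le> 1"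
    if "t \<in> carrier G" "u \<in> carrier G" for t u
    using prob_nonneg[OF pl, of "inv (t \<otimes> u) \<otimes> s"] prob_le1[OF pl, of "inv (t \<otimes> u) \<otimes> s"] that s
    by simp
  have "((\<lambda>x. conv G \<nu> \<mu> x * l (inv x \<otimes> s)) has_sum
           (\<Sum>\<^sub>\<infinity>t\<in>carrier G. \<nu> t * (\<Sum>\<^sub>\<infinity>u\<in>carrier G. \<mu> u * l (inv (t \<otimes> u) \<otimes> s)))) (carrier G)"
  proof (rule conv_exp[where f="\<lambda>x. l (inv x \<otimes> s)" and \<nu>=\<nu> and \<mu>=\<mu>])
    fix t assume t: "t \<in> carrier G"
    show "(\<lambda>u. \<mu> u * l (inv (t \<otimes> u) \<otimes> s)) summable_on carrier G"
      by (rule inner_bound(1)[OF pm, where \<phi>="\<lambda>u. l (inv (t \<otimes> u) \<otimes> s)"]) (simp add: phi t)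
  next
    show "(\<lambda>t. \<nu> t * (\<Sum>\<^sub>\<infinity>u\<in>carrier G. \<mu> u * l (inv (t \<otimes> u) \<otimes> s))) summable_on carrier G"
    proof (rule inner_bound(1)[OF pn])
      fix t assume "t \<in> carrier G"
      thus "0 \<le> (\<Sum>\<^sub>\<infinity>u\<in>carrier G. \<mu> u * l (inv (t \<otimes> u) \<otimes> s)) \<and>
            (\<Sum>\<^sub>\<infinity>u\<in>carrier G. \<mu> u * l (inv (t \<otimes> u) \<otimes> s)) \<le> 1"
        using inner_bound(2,3)[OF pm, where \<phi>="\<lambda>u. l (inv (t \<otimes> u) \<otimes> s)"] phi by simp
    qed
  next
    show "\<And>t. t \<in> carrier G \<Longrightarrow> 0 \<le> \<nu> t" using prob_nonneg[OF pn] .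
    show "\<And>t. t \<in> carrier G \<Longrightarrow> 0 \<le> \<mu> t" using prob_nonneg[OF pm] .
    show "\<And>x. x \<in> carrier G \<Longrightarrow> 0 \<le> l (inv x \<otimes> s)" using prob_nonneg[OF pl] s by simp
  qed
  hence "conv G (conv G \<nu> \<mu>) l s =
     (\<Sum>\<^sub>\<infinity>t\<in>carrier G. \<nu> t * (\<Sum>\<^sub>\<infinity>u\<in>carrier G. \<mu> u * l (inv (t \<otimes> u) \<otimes> s)))"
    unfolding conv_def[of G "conv G \<nu> \<mu>"] by (simp add: infsumI)
  also have "\<dots> = (\<Sum>\<^sub>\<infinity>t\<in>carrier G. \<nu> t * conv G \<mu> l (inv t \<otimes> s))"
  proof -
    have e: "inv (t \<otimes> u) \<otimes> s = inv u \<otimes> (inv t \<otimes> s)" if "t \<in> carrier G" "u \<in> carrier G" for t u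
      using that s by (simp add: inv_mult_group m_assoc)
    show ?thesis unfolding conv_def
      by (intro infsum_cong) (simp add: e cong: infsum_cong)
  qed
  also have "\<dots> = conv G \<nu> (conv G \<mu> l) s" unfolding conv_def[of G \<nu>] ..
  finally show ?thesis .
qed

lemma pow_add:
  assumes p: "prob_on G \<mu>"
  shows "s \<in> carrier G \<Longrightarrow> conv_pow G \<mu> (n + m) s = conv G (conv_pow G \<mu> n) (conv_pow G \<mu> m) s"
proof (induction m arbitrary: s)
  case 0 thus ?case using conv_delta_right by simp
next
  case (Suc m)
  have "conv_pow G \<mu> (n + Suc m) s = conv G (conv_pow G \<mu> (n + m)) \<mu> s" by simp
  also have "\<dots> = conv G (conv G (conv_pow G \<mu> n) (conv_pow G \<mu> m)) \<mu> s"
    by (rule conv_cong) (use Suc in auto)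
  also have "\<dots> = conv G (conv_pow G \<mu> n) (conv G (conv_pow G \<mu> m) \<mu>) s"
    by (rule conv_assoc) (use p Suc in \<open>auto intro: prob_pow\<close>)
  finally show ?case by simp
qed

end


context group
begin

lemma moment_conv:
  assumes h0: "\<And>s. s \<in> carrier G \<Longrightarrow> 0 \<le> h s" and K: "0 \<le> K"
    and sub: "\<And>s t. s \<in> carrier G \<Longrightarrow> t \<in> carrier G \<Longrightarrow> h (s \<otimes> t) \<le> K + h s + h t"
    and pn: "prob_on G \<nu>" and pm: "prob_on G \<mu>"
    and sn: "(\<lambda>s. \<nu> s * h s) summable_on carrier G" and sm: "(\<lambda>s. \<mu> s * h s) summable_on carrier G"
  shows "(\<lambda>s. conv G \<nu> \<mu> s * h s) summable_on carrier G"
    and "(\<Sum>\<^sub>\<infinity>s\<in>carrier G. conv G \<nu> \<mu> s * h s)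
          \<le> K + (\<Sum>\<^sub>\<infinity>s\<in>carrier G. \<nu> s * h s) + (\<Sum>\<^sub>\<infinity>s\<in>carrier G. \<mu> s * h s)"
proof -
  define Em where "Em = (\<Sum>\<^sub>\<infinity>s\<in>carrier G. \<mu> s * h s)"
  define En where "En = (\<Sum>\<^sub>\<infinity>s\<in>carrier G. \<nu> s * h s)"
  define I where "I t = (\<Sum>\<^sub>\<infinity>u\<in>carrier G. \<mu> u * h (t \<otimes> u))" for t
  have inner: "(\<lambda>u. \<mu> u * h (t \<otimes> u)) summable_on carrier G \<and> I t \<le> K + h t + Em"
    if t: "t \<in> carrier G" for t
  proof -
    have maj: "(\<lambda>u. \<mu> u * (K + h t) + \<mu> u * h u) summable_on carrier G"
      by (intro summable_on_add summable_on_cmult_left prob_summable[OF pm] sm)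
    have le: "\<mu> u * h (t \<otimes> u) \<le> \<mu> u * (K + h t) + \<mu> u * h u" if u: "u \<in> carrier G" for u
      using mult_left_mono[OF sub[OF t u] prob_nonneg[OF pm u]] by (simp add: algebra_simps)
    have ge: "0 \<le> \<mu> u * h (t \<otimes> u)" if u: "u \<in> carrier G" for u
      using h0[of "t \<otimes> u"] prob_nonneg[OF pm u] t u by simp
    have S: "(\<lambda>u. \<mu> u * h (t \<otimes> u)) summable_on carrier G"
      by (rule summable_on_comparison_test[OF maj le ge])
    have "I t \<le> (\<Sum>\<^sub>\<infinity>u\<in>carrier G. \<mu> u * (K + h t) + \<mu> u * h u)"
      unfolding I_def by (rule infsum_mono[OF S maj le])
    also have "\<dots> = (\<Sum>\<^sub>\<infinity>u\<in>carrier G. \<mu> u * (K + h t)) + Em"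
      unfolding Em_def by (rule infsum_add[OF summable_on_cmult_left[OF prob_summable[OF pm]] sm])
    also have "(\<Sum>\<^sub>\<infinity>u\<in>carrier G. \<mu> u * (K + h t)) = K + h t"
      by (simp add: infsum_cmult_left' prob_sum[OF pm])
    finally show ?thesis using S by simp
  qed
  have I0: "0 \<le> I t" if "t \<in> carrier G" for t
    unfolding I_def using that h0 prob_nonneg[OF pm] by (intro infsum_nonneg mult_nonneg_nonneg) auto
  have omaj: "(\<lambda>t. \<nu> t * (K + Em) + \<nu> t * h t) summable_on carrier G"
    by (intro summable_on_add summable_on_cmult_left prob_summable[OF pn] sn)
  have ole: "\<nu> t * I t \<le> \<nu> t * (K + Em) + \<nu> t * h t" if t: "t \<in> carrier G" for t
    using mult_left_mono[OF conjunct2[OF inner[OF t]] prob_nonneg[OF pn t]] by (simp add: algebra_simps)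
  have oge: "0 \<le> \<nu> t * I t" if t: "t \<in> carrier G" for t
    using I0[OF t] prob_nonneg[OF pn t] by simp
  have OS: "(\<lambda>t. \<nu> t * I t) summable_on carrier G"
    by (rule summable_on_comparison_test[OF omaj ole oge])
  have H: "((\<lambda>s. conv G \<nu> \<mu> s * h s) has_sum (\<Sum>\<^sub>\<infinity>t\<in>carrier G. \<nu> t * I t)) (carrier G)"
    unfolding I_def
  proof (rule conv_exp[where f=h])
    show "(\<lambda>t. \<nu> t * (\<Sum>\<^sub>\<infinity>u\<in>carrier G. \<mu> u * h (t \<otimes> u))) summable_on carrier G"
      using OS unfolding I_def .
  qed (use inner h0 prob_nonneg[OF pn] prob_nonneg[OF pm] in auto)
  show "(\<lambda>s. conv G \<nu> \<mu> s * h s) summable_on carrier G" using H by (rule has_sum_imp_summable)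
  have "(\<Sum>\<^sub>\<infinity>s\<in>carrier G. conv G \<nu> \<mu> s * h s) = (\<Sum>\<^sub>\<infinity>t\<in>carrier G. \<nu> t * I t)"
    using H by (rule infsumI)
  also have "\<dots> \<le> (\<Sum>\<^sub>\<infinity>t\<in>carrier G. \<nu> t * (K + Em) + \<nu> t * h t)"
    by (rule infsum_mono[OF OS omaj ole])
  also have "\<dots> = (\<Sum>\<^sub>\<infinity>t\<in>carrier G. \<nu> t * (K + Em)) + En"
    unfolding En_def by (rule infsum_add[OF summable_on_cmult_left[OF prob_summable[OF pn]] sn])
  also have "(\<Sum>\<^sub>\<infinity>t\<in>carrier G. \<nu> t * (K + Em)) = K + Em"
    by (simp add: infsum_cmult_left' prob_sum[OF pn])
  finally show "(\<Sum>\<^sub>\<infinity>s\<in>carrier G. conv G \<nu> \<mu> s * h s)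
          \<le> K + (\<Sum>\<^sub>\<infinity>s\<in>carrier G. \<nu> s * h s) + (\<Sum>\<^sub>\<infinity>s\<in>carrier G. \<mu> s * h s)"
    unfolding Em_def En_def by simp
qed

lemma pow_moment:
  assumes h0: "\<And>s. s \<in> carrier G \<Longrightarrow> 0 \<le> h s" and K: "0 \<le> K"
    and sub: "\<And>s t. s \<in> carrier G \<Longrightarrow> t \<in> carrier G \<Longrightarrow> h (s \<otimes> t) \<le> K + h s + h t"
    and pm: "prob_on G \<mu>" and sm: "(\<lambda>s. \<mu> s * h s) summable_on carrier G"
  shows "(\<lambda>s. conv_pow G \<mu> n s * h s) summable_on carrier G"
proof (induction n)
  case 0
  have "(\<lambda>s. (if s = \<one> then 1 else 0) * h s) summable_on {\<one>}" by simp
  hence "(\<lambda>s. (if s = \<one> then 1 else 0) * h s) summable_on carrier G"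
    by (subst summable_on_cong_neutral[where T="{\<one>}" and g="\<lambda>s. (if s = \<one> then 1 else 0) * h s"]) auto
  thus ?case by simp
next
  case (Suc n)
  show ?case using moment_conv(1)[OF h0 K sub prob_pow[OF pm] pm Suc sm] by simp
qed

lemma pow_subadd:
  assumes h0: "\<And>s. s \<in> carrier G \<Longrightarrow> 0 \<le> h s" and K: "0 \<le> K"
    and sub: "\<And>s t. s \<in> carrier G \<Longrightarrow> t \<in> carrier G \<Longrightarrow> h (s \<otimes> t) \<le> K + h s + h t"
    and pm: "prob_on G \<mu>" and sm: "(\<lambda>s. \<mu> s * h s) summable_on carrier G"
  shows "(\<Sum>\<^sub>\<infinity>s\<in>carrier G. conv_pow G \<mu> (n + m) s * h s)
     \<le> K + (\<Sum>\<^sub>\<infinity>s\<in>carrier G. conv_pow G \<mu> n s * h s) + (\<Sum>\<^sub>\<infinity>s\<in>carrier G. conv_pow G \<mu> m s * h s)"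
proof -
  have "(\<Sum>\<^sub>\<infinity>s\<in>carrier G. conv_pow G \<mu> (n + m) s * h s)
      = (\<Sum>\<^sub>\<infinity>s\<in>carrier G. conv G (conv_pow G \<mu> n) (conv_pow G \<mu> m) s * h s)"
    by (intro infsum_cong) (simp add: pow_add[OF pm])
  also have "\<dots> \<le> K + (\<Sum>\<^sub>\<infinity>s\<in>carrier G. conv_pow G \<mu> n s * h s) + (\<Sum>\<^sub>\<infinity>s\<in>carrier G. conv_pow G \<mu> m s * h s)"
    by (rule moment_conv(2)[OF h0 K sub prob_pow[OF pm] prob_pow[OF pm]
          pow_moment[OF h0 K sub pm sm] pow_moment[OF h0 K sub pm sm]])
  finally show ?thesis .
qed

lemma seq_limit:
  assumes h0: "\<And>s. s \<in> carrier G \<Longrightarrow> 0 \<le> h s" and K: "0 \<le> K"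
    and sub: "\<And>s t. s \<in> carrier G \<Longrightarrow> t \<in> carrier G \<Longrightarrow> h (s \<otimes> t) \<le> K + h s + h t"
    and pm: "prob_on G \<mu>" and sm: "(\<lambda>s. \<mu> s * h s) summable_on carrier G"
  shows "\<exists>L\<ge>0. (\<lambda>n. (\<Sum>\<^sub>\<infinity>s\<in>carrier G. conv_pow G \<mu> n s * h s) / real n) \<longlonglongrightarrow> L"
proof -
  define E where "E n = (\<Sum>\<^sub>\<infinity>s\<in>carrier G. conv_pow G \<mu> n s * h s)" for n
  have E0: "0 \<le> E n" for n
    unfolding E_def using h0 prob_nonneg[OF prob_pow[OF pm]] by (intro infsum_nonneg mult_nonneg_nonneg) auto
  define u where "u n = E n + K" for n
  have "(\<lambda>n. u n / real n) \<longlonglongrightarrow> Inf ((\<lambda>n. u n / real n) ` {0<..})"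
  proof (rule fekete[where c=0])
    fix m n :: nat
    show "u (m + n) \<le> u m + u n" using pow_subadd[OF h0 K sub pm sm, of m n] K
      unfolding u_def E_def by simp
  next
    fix n :: nat show "0 \<le> u n" unfolding u_def using E0[of n] K by simp
  qed
  moreover have "Inf ((\<lambda>n. u n / real n) ` {0<..}) \<ge> 0"
    by (rule cInf_greatest) (use E0 K in \<open>auto simp: u_def\<close>)
  moreover have "(\<lambda>n. K / real n) \<longlonglongrightarrow> 0" by (rule lim_const_over_n)
  ultimately have "(\<lambda>n. u n / real n - K / real n) \<longlonglongrightarrow> Inf ((\<lambda>n. u n / real n) ` {0<..}) - 0"
    by (intro tendsto_diff) auto
  moreover have "u n / real n - K / real n = E n / real n" for n
    unfolding u_def by (simp add: add_divide_distrib)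
  ultimately show ?thesis
    using \<open>Inf ((\<lambda>n. u n / real n) ` {0<..}) \<ge> 0\<close> unfolding E_def by (intro exI[of _ "Inf ((\<lambda>n. u n / real n) ` {0<..})"]) auto
qed

end


context group
begin

lemma lyap_main:
  assumes wt: "weight G w" and pm: "prob_on G \<mu>" and fl: "finite_log_moment G w \<mu>"
  shows "\<exists>L\<ge>0. lyap_seq G w \<mu> \<longlonglongrightarrow> L"
    and "(\<lambda>s. conv_pow G \<mu> n s * ln (w s)) summable_on carrier G"
proof -
  from wt obtain a C where a: "a > 0" "\<And>s. s \<in> carrier G \<Longrightarrow> a \<le> w s"
    and C: "C > 0" "\<And>s t. s \<in> carrier G \<Longrightarrow> t \<in> carrier G \<Longrightarrow> w (s \<otimes> t) \<le> C * w s * w t"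
    unfolding weight_def by blast
  have wpos: "0 < w s" if "s \<in> carrier G" for s using a(1) a(2)[OF that] by linarith
  define h where "h s = ln (w s) - ln a" for s
  define K where "K = max 0 (ln C + ln a)"
  have K: "0 \<le> K" unfolding K_def by simp
  have h0: "0 \<le> h s" if "s \<in> carrier G" for s
    unfolding h_def using a(1) a(2)[OF that] by simp
  have sub: "h (s \<otimes> t) \<le> K + h s + h t" if s: "s \<in> carrier G" and t: "t \<in> carrier G" for s t
  proof -
    have "ln (w (s \<otimes> t)) \<le> ln (C * w s * w t)"
      using C(2)[OF s t] wpos[of "s \<otimes> t"] s t by simp
    also have "\<dots> = ln C + ln (w s) + ln (w t)"
      using C(1) wpos[OF s] wpos[OF t] by (simp add: ln_mult)
    finally show ?thesis unfolding h_def K_def by linarith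
  qed
  have "(\<lambda>s. \<mu> s * ln (w s) + \<mu> s * (- ln a)) summable_on carrier G"
    using fl unfolding finite_log_moment_def
    by (intro summable_on_add summable_on_cmult_left prob_summable[OF pm])
  hence sm: "(\<lambda>s. \<mu> s * h s) summable_on carrier G"
    by (rule summable_on_cong[THEN iffD1, rotated]) (simp add: h_def algebra_simps)
  have Sn: "(\<lambda>s. conv_pow G \<mu> n s * h s) summable_on carrier G" for n
    by (rule pow_moment[OF h0 K sub pm sm])
  have Sn1: "(\<lambda>s. conv_pow G \<mu> n s * ln a) summable_on carrier G" for n
    by (intro summable_on_cmult_left prob_summable[OF prob_pow[OF pm]])
  have Sn2: "(\<lambda>s. conv_pow G \<mu> n s * h s + conv_pow G \<mu> n s * ln a) summable_on carrier G" for n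
    by (intro summable_on_add Sn Sn1)
  have cg: "conv_pow G \<mu> n s * ln (w s) = conv_pow G \<mu> n s * h s + conv_pow G \<mu> n s * ln a" for n s
    unfolding h_def by (simp add: algebra_simps)
  show "(\<lambda>s. conv_pow G \<mu> n s * ln (w s)) summable_on carrier G"
    using Sn2[of n] unfolding cg .
  have eq: "(\<Sum>\<^sub>\<infinity>s\<in>carrier G. conv_pow G \<mu> n s * ln (w s))
      = (\<Sum>\<^sub>\<infinity>s\<in>carrier G. conv_pow G \<mu> n s * h s) + ln a" for n
    unfolding cg infsum_add[OF Sn Sn1] infsum_cmult_left' prob_sum[OF prob_pow[OF pm]] by simp
  obtain L where L: "L \<ge> 0" "(\<lambda>n. (\<Sum>\<^sub>\<infinity>s\<in>carrier G. conv_pow G \<mu> n s * h s) / real n) \<longlonglongrightarrow> L"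
    using seq_limit[OF h0 K sub pm sm] by blast
  have "(\<lambda>n. (\<Sum>\<^sub>\<infinity>s\<in>carrier G. conv_pow G \<mu> n s * h s) / real n + ln a / real n) \<longlonglongrightarrow> L + 0"
    by (intro tendsto_add L(2) lim_const_over_n)
  moreover have "lyap_seq G w \<mu> = (\<lambda>n. (\<Sum>\<^sub>\<infinity>s\<in>carrier G. conv_pow G \<mu> n s * h s) / real n + ln a / real n)"
    by (rule ext) (simp add: lyap_seq_def eq add_divide_distrib)
  ultimately show "\<exists>L\<ge>0. lyap_seq G w \<mu> \<longlonglongrightarrow> L" using L(1) by auto
qed

lemma lyap_equiv:
  assumes wt: "weight G w" and pm: "prob_on G \<mu>" and fl: "finite_log_moment G w \<mu>"
    and eqv: "weight_equiv G w w'" and lim: "lyap_seq G w \<mu> \<longlonglongrightarrow> L"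
  shows "lyap_seq G w' \<mu> \<longlonglongrightarrow> L"
proof -
  from wt obtain a where a: "a > 0" "\<And>s. s \<in> carrier G \<Longrightarrow> a \<le> w s"
    unfolding weight_def by blast
  have wpos: "0 < w s" if "s \<in> carrier G" for s using a(1) a(2)[OF that] by linarith
  from eqv obtain c c' where c: "c > 0" "c' > 0"
    and cc: "\<And>s. s \<in> carrier G \<Longrightarrow> c * w s \<le> w' s \<and> w' s \<le> c' * w s"
    unfolding weight_equiv_def by blast
  define d where "d s = ln (w' s) - ln (w s)" for s
  define D where "D = \<bar>ln c\<bar> + \<bar>ln c'\<bar>"
  have dD: "\<bar>d s\<bar> \<le> D" if s: "s \<in> carrier G" for s
  proof -
    have w's: "0 < w' s" using cc[OF s] c wpos[OF s] by (smt (verit) mult_pos_pos)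
    have "ln (c * w s) \<le> ln (w' s)" using cc[OF s] c wpos[OF s] w's by simp
    hence 1: "ln c + ln (w s) \<le> ln (w' s)" using c wpos[OF s] by (simp add: ln_mult)
    have "ln (w' s) \<le> ln (c' * w s)" using cc[OF s] c wpos[OF s] w's by simp
    hence 2: "ln (w' s) \<le> ln c' + ln (w s)" using c wpos[OF s] by (simp add: ln_mult)
    show ?thesis unfolding d_def D_def using 1 2 by linarith
  qed
  define e where "e n = (\<Sum>\<^sub>\<infinity>s\<in>carrier G. conv_pow G \<mu> n s * d s)" for n
  have pn: "prob_on G (conv_pow G \<mu> n)" for n using prob_pow[OF pm] .
  have SD: "(\<lambda>s. D * conv_pow G \<mu> n s) summable_on carrier G" for n
    by (intro summable_on_cmult_right prob_summable[OF pn])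
  have Sd: "(\<lambda>s. conv_pow G \<mu> n s * d s) summable_on carrier G" for n
  proof -
    have "(\<lambda>s. norm (D * conv_pow G \<mu> n s)) summable_on carrier G"
      by (rule summable_on_iff_abs_summable_on_real[THEN iffD1, OF SD[of n]])
    hence "(\<lambda>s. norm (conv_pow G \<mu> n s * d s)) summable_on carrier G"
    proof (rule Infinite_Sum.abs_summable_on_comparison_test)
      fix s assume s: "s \<in> carrier G"
      have "\<bar>conv_pow G \<mu> n s * d s\<bar> = conv_pow G \<mu> n s * \<bar>d s\<bar>"
        using prob_nonneg[OF pn s] by (simp add: abs_mult)
      also have "\<dots> \<le> conv_pow G \<mu> n s * D" using dD[OF s] prob_nonneg[OF pn s] by (rule mult_left_mono)
      finally show "norm (conv_pow G \<mu> n s * d s) \<le> norm (D * conv_pow G \<mu> n s)"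
        using prob_nonneg[OF pn s] dD[OF s] by (simp add: abs_mult mult.commute)
    qed
    thus ?thesis by (rule summable_on_iff_abs_summable_on_real[THEN iffD2])
  qed
  have eb: "\<bar>e n\<bar> \<le> D" for n
  proof -
    have "e n \<le> (\<Sum>\<^sub>\<infinity>s\<in>carrier G. D * conv_pow G \<mu> n s)"
      unfolding e_def
    proof (rule infsum_mono[OF Sd SD])
      fix s assume s: "s \<in> carrier G"
      show "conv_pow G \<mu> n s * d s \<le> D * conv_pow G \<mu> n s"
        using mult_left_mono[of "d s" D "conv_pow G \<mu> n s"] dD[OF s] prob_nonneg[OF pn s] by (simp add: mult.commute)
    qed
    moreover have "(\<Sum>\<^sub>\<infinity>s\<in>carrier G. - D * conv_pow G \<mu> n s) \<le> e n"
      unfolding e_def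
    proof (rule infsum_mono[OF summable_on_cmult_right[OF prob_summable[OF pn]] Sd])
      fix s assume s: "s \<in> carrier G"
      show "- D * conv_pow G \<mu> n s \<le> conv_pow G \<mu> n s * d s"
        using mult_left_mono[of "- D" "d s" "conv_pow G \<mu> n s"] dD[OF s] prob_nonneg[OF pn s] by (simp add: mult.commute)
    qed
    moreover have "(\<Sum>\<^sub>\<infinity>s\<in>carrier G. - D * conv_pow G \<mu> n s) = - D"
      by (subst infsum_cmult_right') (simp add: prob_sum[OF pn])
    moreover have "(\<Sum>\<^sub>\<infinity>s\<in>carrier G. D * conv_pow G \<mu> n s) = D"
      by (subst infsum_cmult_right') (simp add: prob_sum[OF pn])
    ultimately show ?thesis by linarith
  qed
  have eq: "lyap_seq G w' \<mu> n = lyap_seq G w \<mu> n + e n / real n" for n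
  proof -
    have "(\<Sum>\<^sub>\<infinity>s\<in>carrier G. conv_pow G \<mu> n s * ln (w' s))
        = (\<Sum>\<^sub>\<infinity>s\<in>carrier G. conv_pow G \<mu> n s * ln (w s) + conv_pow G \<mu> n s * d s)"
      by (intro infsum_cong) (simp add: d_def algebra_simps)
    also have "\<dots> = (\<Sum>\<^sub>\<infinity>s\<in>carrier G. conv_pow G \<mu> n s * ln (w s)) + e n"
      unfolding e_def by (rule infsum_add[OF lyap_main(2)[OF wt pm fl] Sd])
    finally show ?thesis unfolding lyap_seq_def by (simp add: add_divide_distrib)
  qed
  have "(\<lambda>n. e n / real n) \<longlonglongrightarrow> 0"
  proof (rule Lim_null_comparison)
    show "\<forall>\<^sub>F n in sequentially. norm (e n / real n) \<le> D / real n"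
      using eb by (intro always_eventually allI) (simp add: divide_right_mono)
    show "(\<lambda>n. D / real n) \<longlonglongrightarrow> 0" by (rule lim_const_over_n)
  qed
  hence "(\<lambda>n. lyap_seq G w \<mu> n + e n / real n) \<longlonglongrightarrow> L + 0" by (intro tendsto_add lim)
  thus ?thesis unfolding eq by simp
qed

end


context group
begin

lemma words_sub: "S \<subseteq> carrier G \<Longrightarrow> words G S n \<subseteq> carrier G"
  by (induction n) auto

lemma words_one: assumes "\<one> \<in> S" "S \<subseteq> carrier G" shows "\<one> \<in> words G S n"
proof (induction n)
  case 0 thus ?case by simp
next
  case (Suc n)
  have "\<exists>x y. \<one> = x \<otimes> y \<and> x \<in> words G S n \<and> y \<in> S"
    using Suc.IH assms by (intro exI[of _ \<one>]) simp
  thus ?case by simp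
qed

lemma words_finite: "finite S \<Longrightarrow> finite (words G S n)"
  by (induction n) (auto simp: finite_image_set2)

lemma words_mult:
  assumes S: "S \<subseteq> carrier G" and x: "x \<in> words G S n"
  shows "y \<in> words G S m \<Longrightarrow> x \<otimes> y \<in> words G S (n + m)"
proof (induction m arbitrary: y)
  case 0
  have "x \<in> carrier G" using words_sub[OF S] x by auto
  thus ?case using 0 x by simp
next
  case (Suc m)
  then obtain y' z where y: "y = y' \<otimes> z" "y' \<in> words G S m" "z \<in> S" by auto
  have c: "x \<in> carrier G" "y' \<in> carrier G" "z \<in> carrier G"
    using words_sub[OF S] x y S by auto
  have "x \<otimes> y = (x \<otimes> y') \<otimes> z" using c y by (simp add: m_assoc)
  moreover have "x \<otimes> y' \<in> words G S (n + m)" using Suc.IH y by simp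
  ultimately show ?case using y by auto
qed

lemma words_split:
  assumes S: "S \<subseteq> carrier G"
  shows "z \<in> words G S (n + m) \<Longrightarrow> \<exists>x\<in>words G S n. \<exists>y\<in>words G S m. z = x \<otimes> y"
proof (induction m arbitrary: z)
  case 0
  have "z \<in> carrier G" using words_sub[OF S] 0 by auto
  hence "z = z \<otimes> \<one>" by simp
  thus ?case using 0 by auto
next
  case (Suc m)
  then obtain z' t where z: "z = z' \<otimes> t" "z' \<in> words G S (n + m)" "t \<in> S" by auto
  then obtain x y where xy: "x \<in> words G S n" "y \<in> words G S m" "z' = x \<otimes> y" using Suc.IH by blast
  have c: "x \<in> carrier G" "y \<in> carrier G" "t \<in> carrier G"
    using words_sub[OF S] xy z S by auto
  have "z = x \<otimes> (y \<otimes> t)" using z xy c by (simp add: m_assoc)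
  moreover have "y \<otimes> t \<in> words G S (Suc m)" using xy z by auto
  ultimately show ?case using xy by blast
qed

lemma words_gen:
  assumes S: "S \<subseteq> carrier G" and inv: "\<forall>s\<in>S. inv s \<in> S" and gen: "generate G S = carrier G"
    and s: "s \<in> carrier G"
  shows "\<exists>n. s \<in> words G S n"
proof -
  have one: "h \<in> words G S 1" if "h \<in> S" for h
  proof -
    have "h = \<one> \<otimes> h" using that S by auto
    thus ?thesis using that by auto
  qed
  have "x \<in> generate G S \<Longrightarrow> \<exists>n. x \<in> words G S n" for x
  proof (induction rule: generate.induct)
    case one thus ?case by (intro exI[of _ 0]) simp
  next
    case (incl h) thus ?case using one by blast
  next
    case (inv h) thus ?case using one assms(2) by blast
  next
    case (eng h1 h2) thus ?case using words_mult[OF S] by blast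
  qed
  thus ?thesis using gen s by blast
qed

lemma wl_mem:
  assumes "S \<subseteq> carrier G" "\<forall>s\<in>S. inv s \<in> S" "generate G S = carrier G" "s \<in> carrier G"
  shows "s \<in> words G S (word_length G S s)"
  unfolding word_length_def by (rule LeastI_ex) (rule words_gen[OF assms])

lemma wl_le: "s \<in> words G S n \<Longrightarrow> word_length G S s \<le> n"
  unfolding word_length_def by (rule Least_le)

lemma wl_sub:
  assumes S: "S \<subseteq> carrier G" "\<forall>s\<in>S. inv s \<in> S" "generate G S = carrier G"
    and s: "s \<in> carrier G" and t: "t \<in> carrier G"
  shows "real (word_length G S (s \<otimes> t)) \<le> 0 + real (word_length G S s) + real (word_length G S t)"
  using wl_le[OF words_mult[OF S(1) wl_mem[OF S s] wl_mem[OF S t]]] by simp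

lemma growth_main:
  assumes wt: "weight G w" and S: "S \<subseteq> carrier G" "\<forall>s\<in>S. inv s \<in> S" "generate G S = carrier G"
    and fin: "finite S" and one: "\<one> \<in> S"
  shows "\<exists>Lg\<ge>0. growth_rate G w S = exp Lg \<and>
     (\<forall>\<epsilon>>0. \<exists>B. \<forall>s\<in>carrier G. ln (w s) \<le> (Lg + \<epsilon>) * real (word_length G S s) + B)"
proof -
  from wt obtain a C where a: "a > 0" "\<And>s. s \<in> carrier G \<Longrightarrow> a \<le> w s"
    and C: "C > 0" "\<And>s t. s \<in> carrier G \<Longrightarrow> t \<in> carrier G \<Longrightarrow> w (s \<otimes> t) \<le> C * w s * w t"
    unfolding weight_def by blast
  have wpos: "0 < w s" if "s \<in> carrier G" for s using a(1) a(2)[OF that] by linarith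
  define M where "M n = (SUP s\<in>words G S n. w s)" for n
  have ne: "words G S n \<noteq> {}" for n using words_one[OF one S(1)] by auto
  have Mup: "w s \<le> M n" if "s \<in> words G S n" for s n
    unfolding M_def using that words_finite[OF fin] by (intro cSUP_upper) auto
  have Ma: "a \<le> M n" for n
    using a(2)[of \<one>] Mup[OF words_one[OF one S(1)], of n] by simp
  have Mpos: "0 < M n" for n using Ma[of n] a(1) by linarith
  have Msub: "M (n + m) \<le> C * M n * M m" for n m
    unfolding M_def[of "n + m"]
  proof (rule cSUP_least[OF ne])
    fix z assume z: "z \<in> words G S (n + m)"
    then obtain x y where xy: "x \<in> words G S n" "y \<in> words G S m" "z = x \<otimes> y"
      using words_split[OF S(1)] by blast
    have c: "x \<in> carrier G" "y \<in> carrier G" using xy words_sub[OF S(1)] by auto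
    have "w z \<le> C * w x * w y" using C(2)[OF c] xy by simp
    also have "\<dots> \<le> C * M n * M m"
      using Mup[OF xy(1)] Mup[OF xy(2)] C(1) wpos[OF c(1)] wpos[OF c(2)]
      by (intro mult_mono mult_left_mono) auto
    finally show "w z \<le> C * M n * M m" .
  qed
  define b where "b n = ln C + ln (M n)" for n
  have bsub: "b (m + n) \<le> b m + b n" for m n
  proof -
    have "ln (M (m + n)) \<le> ln (C * M m * M n)" using Msub[of m n] Mpos C(1) by simp
    also have "\<dots> = ln C + ln (M m) + ln (M n)" using Mpos[of m] Mpos[of n] C(1) by (simp add: ln_mult)
    finally show ?thesis unfolding b_def by simp
  qed
  have blb: "ln C + ln a \<le> b n" for n unfolding b_def using Ma[of n] a(1) by simp
  define Lg where "Lg = Inf ((\<lambda>n. b n / real n) ` {0<..})"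
  have bL: "(\<lambda>n. b n / real n) \<longlonglongrightarrow> Lg" unfolding Lg_def
    by (rule fekete[where c="ln C + ln a"]) (use bsub blb in auto)
  have Lg0: "Lg \<ge> 0"
  proof (rule LIMSEQ_le[OF lim_const_over_n[of "ln C + ln a"] bL])
    show "\<exists>N. \<forall>n\<ge>N. (ln C + ln a) / real n \<le> b n / real n"
      using blb by (intro exI[of _ 0] allI impI divide_right_mono) auto
  qed
  have "(\<lambda>n. exp (b n / real n - ln C / real n)) \<longlonglongrightarrow> exp (Lg - 0)"
    by (intro tendsto_exp tendsto_diff bL lim_const_over_n)
  moreover have "exp (b n / real n - ln C / real n) = M n powr (1 / real n)" for n
    using Mpos[of n] unfolding b_def powr_def by (simp add: add_divide_distrib)
  ultimately have "(\<lambda>n. M n powr (1 / real n)) \<longlonglongrightarrow> exp Lg" by simp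
  hence gr: "growth_rate G w S = exp Lg" unfolding growth_rate_def M_def by (rule limI)
  have bound: "\<exists>B. \<forall>s\<in>carrier G. ln (w s) \<le> (Lg + \<epsilon>) * real (word_length G S s) + B"
    if e: "\<epsilon> > 0" for \<epsilon>
  proof -
    have "\<forall>\<^sub>F n in sequentially. b n / real n < Lg + \<epsilon>"
      using bL e by (intro order_tendstoD(2)) auto
    then obtain N where N: "\<And>n. n \<ge> N \<Longrightarrow> b n / real n < Lg + \<epsilon>"
      unfolding eventually_sequentially by blast
    define B where "B = \<bar>Max ((\<lambda>k. ln (M k)) ` {..N})\<bar> + \<bar>ln C\<bar>"
    show ?thesis
    proof (intro exI[of _ B] ballI)
      fix s assume s: "s \<in> carrier G"
      define k where "k = word_length G S s"
      have sk: "s \<in> words G S k" unfolding k_def by (rule wl_mem[OF S s])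
      have ws: "ln (w s) \<le> ln (M k)" using Mup[OF sk] wpos[OF s] by simp
      have nn: "0 \<le> (Lg + \<epsilon>) * real k" using Lg0 e by simp
      show "ln (w s) \<le> (Lg + \<epsilon>) * real (word_length G S s) + B"
      proof (cases "k \<le> N")
        case True
        have "ln (M k) \<le> Max ((\<lambda>k. ln (M k)) ` {..N})" using True by (intro Max_ge) auto
        hence "ln (M k) \<le> B" unfolding B_def by linarith
        thus ?thesis using ws nn unfolding k_def by linarith
      next
        case False
        hence kpos: "real k > 0" by simp
        have "b k / real k < Lg + \<epsilon>" using N False by simp
        hence "b k < (Lg + \<epsilon>) * real k" using kpos by (simp add: divide_less_eq)
        hence "ln (M k) < (Lg + \<epsilon>) * real k - ln C" unfolding b_def by linarith
        moreover have "- ln C \<le> B" unfolding B_def by linarith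
        ultimately show ?thesis using ws unfolding k_def by linarith
      qed
    qed
  qed
  show ?thesis using Lg0 gr bound by blast
qed

lemma lyap_upper:
  assumes wt: "weight G w" and pm: "prob_on G \<mu>" and fl: "finite_log_moment G w \<mu>"
    and S: "S \<subseteq> carrier G" "\<forall>s\<in>S. inv s \<in> S" "generate G S = carrier G"
    and fin: "finite S" and one: "\<one> \<in> S" and ffm: "finite_first_moment G S \<mu>"
  shows "lyapunov G w \<mu> \<le> ln (growth_rate G w S) * speed G S \<mu>"
proof -
  obtain Ly where Ly: "lyap_seq G w \<mu> \<longlonglongrightarrow> Ly" using lyap_main(1)[OF wt pm fl] by blast
  define h where "h s = real (word_length G S s)" for s
  have h0: "0 \<le> h s" for s unfolding h_def by simp
  have hsub: "h (s \<otimes> t) \<le> 0 + h s + h t" if "s \<in> carrier G" "t \<in> carrier G" for s t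
    unfolding h_def by (rule wl_sub[OF S that])
  have hs: "(\<lambda>s. \<mu> s * h s) summable_on carrier G"
    using ffm unfolding finite_first_moment_def h_def .
  obtain l where l: "l \<ge> 0" "(\<lambda>n. (\<Sum>\<^sub>\<infinity>s\<in>carrier G. conv_pow G \<mu> n s * h s) / real n) \<longlonglongrightarrow> l"
    using seq_limit[OF h0 _ hsub pm hs] by auto
  have sp: "speed_seq G S \<mu> \<longlonglongrightarrow> l"
    using l(2) unfolding speed_seq_def h_def .
  obtain Lg where Lg: "Lg \<ge> 0" "growth_rate G w S = exp Lg"
    and bound: "\<And>\<epsilon>. \<epsilon> > 0 \<Longrightarrow> \<exists>B. \<forall>s\<in>carrier G. ln (w s) \<le> (Lg + \<epsilon>) * h s + B"
    using growth_main[OF wt S fin one] unfolding h_def by blast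
  have pn: "prob_on G (conv_pow G \<mu> n)" for n using prob_pow[OF pm] .
  have key: "Ly \<le> (Lg + \<epsilon>) * l" if e: "\<epsilon> > 0" for \<epsilon>
  proof -
    obtain B where B: "\<And>s. s \<in> carrier G \<Longrightarrow> ln (w s) \<le> (Lg + \<epsilon>) * h s + B" using bound[OF e] by blast
    have Sh: "(\<lambda>s. conv_pow G \<mu> n s * h s) summable_on carrier G" for n
      by (rule pow_moment[OF h0 _ hsub pm hs]) simp
    have ineq: "lyap_seq G w \<mu> n \<le> (Lg + \<epsilon>) * speed_seq G S \<mu> n + B / real n" for n
    proof -
      have R: "(\<lambda>s. (Lg + \<epsilon>) * (conv_pow G \<mu> n s * h s) + B * conv_pow G \<mu> n s) summable_on carrier G"
        by (intro summable_on_add summable_on_cmult_right Sh prob_summable[OF pn])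
      have "(\<Sum>\<^sub>\<infinity>s\<in>carrier G. conv_pow G \<mu> n s * ln (w s))
          \<le> (\<Sum>\<^sub>\<infinity>s\<in>carrier G. (Lg + \<epsilon>) * (conv_pow G \<mu> n s * h s) + B * conv_pow G \<mu> n s)"
      proof (rule infsum_mono[OF lyap_main(2)[OF wt pm fl] R])
        fix s assume s: "s \<in> carrier G"
        have "conv_pow G \<mu> n s * ln (w s) \<le> conv_pow G \<mu> n s * ((Lg + \<epsilon>) * h s + B)"
          by (rule mult_left_mono[OF B[OF s] prob_nonneg[OF pn s]])
        thus "conv_pow G \<mu> n s * ln (w s) \<le> (Lg + \<epsilon>) * (conv_pow G \<mu> n s * h s) + B * conv_pow G \<mu> n s"
          by (simp add: algebra_simps)
      qed
      also have "\<dots> = (Lg + \<epsilon>) * (\<Sum>\<^sub>\<infinity>s\<in>carrier G. conv_pow G \<mu> n s * h s) + B"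
        by (subst infsum_add[OF summable_on_cmult_right[OF Sh] summable_on_cmult_right[OF prob_summable[OF pn]]])
           (simp add: infsum_cmult_right' prob_sum[OF pn])
      finally have "(\<Sum>\<^sub>\<infinity>s\<in>carrier G. conv_pow G \<mu> n s * ln (w s))
          \<le> (Lg + \<epsilon>) * (\<Sum>\<^sub>\<infinity>s\<in>carrier G. conv_pow G \<mu> n s * h s) + B" .
      hence "lyap_seq G w \<mu> n \<le> ((Lg + \<epsilon>) * (\<Sum>\<^sub>\<infinity>s\<in>carrier G. conv_pow G \<mu> n s * h s) + B) / real n"
        unfolding lyap_seq_def by (rule divide_right_mono) simp
      thus ?thesis unfolding speed_seq_def h_def by (simp add: add_divide_distrib)
    qed
    have "(\<lambda>n. (Lg + \<epsilon>) * speed_seq G S \<mu> n + B / real n) \<longlonglongrightarrow> (Lg + \<epsilon>) * l + 0"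
      by (intro tendsto_add tendsto_mult tendsto_const sp lim_const_over_n)
    hence "Ly \<le> (Lg + \<epsilon>) * l + 0"
      by (rule LIMSEQ_le[OF Ly]) (use ineq in auto)
    thus ?thesis by simp
  qed
  have "Ly \<le> Lg * l"
  proof (rule field_le_epsilon)
    fix e :: real assume e: "e > 0"
    have "Ly \<le> (Lg + e / (l + 1)) * l" using key[of "e / (l + 1)"] e l(1) by simp
    also have "\<dots> = Lg * l + e * (l / (l + 1))" using l(1) by (simp add: algebra_simps)
    also have "\<dots> \<le> Lg * l + e * 1" using e l(1) by (intro add_left_mono mult_left_mono) auto
    finally show "Ly \<le> Lg * l + e" by simp
  qed
  moreover have "lyapunov G w \<mu> = Ly" unfolding lyapunov_def using Ly by (rule limI)
  moreover have "speed G S \<mu> = l" unfolding speed_def using sp by (rule limI)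
  moreover have "ln (growth_rate G w S) = Lg" using Lg by simp
  ultimately show ?thesis by simp
qed

end


theorem proposition3p3:
  fixes G :: "('a, 'b) monoid_scheme" and w :: "'a \<Rightarrow> real" and \<mu> :: "'a \<Rightarrow> real"
  assumes "group G" and "countable (carrier G)"
    and "weight G w"
    and "prob_on G \<mu>"
    and "finite_log_moment G w \<mu>"
  shows "(convergent (lyap_seq G w \<mu>) \<and> lyapunov G w \<mu> \<ge> 0)
    \<and> (\<forall>w'. weight G w' \<and> weight_equiv G w w' \<longrightarrow> lyapunov G w' \<mu> = lyapunov G w \<mu>)
    \<and> (\<forall>S. finite S \<and> S \<subseteq> carrier G \<and> \<one>\<^bsub>G\<^esub> \<in> S \<and> (\<forall>s\<in>S. inv\<^bsub>G\<^esub> s \<in> S)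
          \<and> generate G S = carrier G \<and> finite_first_moment G S \<mu>
          \<longrightarrow> convergent (lyap_seq G w \<mu>)
              \<and> lyapunov G w \<mu> \<le> ln (growth_rate G w S) * speed G S \<mu>)"
proof -
  obtain L where L: "L \<ge> 0" "lyap_seq G w \<mu> \<longlonglongrightarrow> L"
    using group.lyap_main(1)[OF assms(1,3,4,5)] by blast
  have conv: "convergent (lyap_seq G w \<mu>)" using L(2) by (rule convergentI)
  have ly: "lyapunov G w \<mu> = L" unfolding lyapunov_def using L(2) by (rule limI)
  have eq: "lyapunov G w' \<mu> = lyapunov G w \<mu>" if "weight G w' \<and> weight_equiv G w w'" for w'
  proof -
    have "lyap_seq G w' \<mu> \<longlonglongrightarrow> L"
      using group.lyap_equiv[OF assms(1,3,4,5) _ L(2)] that by blast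
    thus ?thesis unfolding ly unfolding lyapunov_def by (rule limI)
  qed
  have up: "lyapunov G w \<mu> \<le> ln (growth_rate G w S) * speed G S \<mu>"
    if "finite S \<and> S \<subseteq> carrier G \<and> \<one>\<^bsub>G\<^esub> \<in> S \<and> (\<forall>s\<in>S. inv\<^bsub>G\<^esub> s \<in> S)
          \<and> generate G S = carrier G \<and> finite_first_moment G S \<mu>" for S
    using group.lyap_upper[OF assms(1,3,4,5)] that by blast
  show ?thesis using conv ly L(1) eq up by auto
qed

end
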